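(* Every Ricci-flat trajectory (as defined in the context) satisfies $(X_1,\dots,X_r,Y_2,\dots,Y_r)(s)\to E$ as $s\to+\infty$, where $E$ is the point with $X_1=0$, $X_i=\frac{\sqrt{d_i}}{n-1}$ and $Y_i=\sqrt{\frac{n-2}{\lambda_i}}\,\frac{\sqrt{d_i}}{n-1}$ for $i=2,\dots,r$.
   Context: Fix $r\ge2$, $d_1=1$, $\lambda_1=0$, and integers $d_i\ge2$ and reals $\lambda_i>0$ for $i=2,\dots,r$; $n=\sum_id_i$. Consider the ODE system, with $'=d/ds$ and $\mathcal G=\sum_{j=1}^rX_j^2$: $X_i'=X_i(\mathcal G-1)+\frac{\lambda_iY_i^2}{\sqrt{d_i}}$, $Y_i'=Y_i\big(\mathcal G-\frac{X_i}{\sqrt{d_i}}\big)$, $i=1,\dots,r$. Let $\mathcal L=\sum_iX_i^2+\sum_i\lambda_iY_i^2-1$, $\mathcal H=\sum_i\sqrt{d_i}X_i$, and $P_0$ the point $X_1=Y_1=1$, $X_i=Y_i=0$ ($i\ge2$). A Ricci-flat trajectory is a non-constant solution defined for all $s\in\mathbb R$ with $\gamma(s)\to P_0$ as $s\to-\infty$, contained in $\{\mathcal L=0,\mathcal H=1\}$, and with $Y_i(s)>0$ for all $i$ and $s$. *)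

theory Defs
  imports "HOL-Analysis.Analysis"
begin

definition calG :: "nat \<Rightarrow> (nat \<Rightarrow> real \<Rightarrow> real) \<Rightarrow> real \<Rightarrow> real" where
  "calG r X s = (\<Sum>j\<in>{1..r}. (X j s)^2)"

definition calL :: "nat \<Rightarrow> (nat \<Rightarrow> real) \<Rightarrow> (nat \<Rightarrow> real \<Rightarrow> real) \<Rightarrow> (nat \<Rightarrow> real \<Rightarrow> real) \<Rightarrow> real \<Rightarrow> real" where
  "calL r lam X Y s = (\<Sum>i\<in>{1..r}. (X i s)^2) + (\<Sum>i\<in>{1..r}. lam i * (Y i s)^2) - 1"

definition calH :: "nat \<Rightarrow> (nat \<Rightarrow> nat) \<Rightarrow> (nat \<Rightarrow> real \<Rightarrow> real) \<Rightarrow> real \<Rightarrow> real" where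
  "calH r d X s = (\<Sum>i\<in>{1..r}. sqrt (real (d i)) * X i s)"

definition ricci_flat_trajectory ::
  "nat \<Rightarrow> (nat \<Rightarrow> nat) \<Rightarrow> (nat \<Rightarrow> real) \<Rightarrow> (nat \<Rightarrow> real \<Rightarrow> real) \<Rightarrow> (nat \<Rightarrow> real \<Rightarrow> real) \<Rightarrow> bool" where
  "ricci_flat_trajectory r d lam X Y \<longleftrightarrow>
     \<comment> \<open>solution of the ODE system on all of R\<close>
     (\<forall>i\<in>{1..r}. \<forall>s.
        ((X i) has_real_derivative
           (X i s * (calG r X s - 1) + lam i * (Y i s)^2 / sqrt (real (d i)))) (at s)
      \<and> ((Y i) has_real_derivative
           (Y i s * (calG r X s - X i s / sqrt (real (d i))))) (at s))
     \<comment> \<open>non-constant\<close>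
   \<and> (\<exists>i\<in>{1..r}. \<exists>s t. X i s \<noteq> X i t \<or> Y i s \<noteq> Y i t)
     \<comment> \<open>gamma(s) tends to P0 as s tends to minus infinity\<close>
   \<and> (\<forall>i\<in>{1..r}. ((X i) \<longlongrightarrow> (if i = 1 then 1 else 0)) at_bot
                 \<and> ((Y i) \<longlongrightarrow> (if i = 1 then 1 else 0)) at_bot)
     \<comment> \<open>contained in L = 0, H = 1\<close>
   \<and> (\<forall>s. calL r lam X Y s = 0 \<and> calH r d X s = 1)
     \<comment> \<open>positivity of all Y_i\<close>
   \<and> (\<forall>i\<in>{1..r}. \<forall>s. Y i s > 0)"

end

theory Submission
  imports Defs
begin

lemma mono_conv:
  fixes f :: "real \<Rightarrow> real"
  assumes dec: "\<And>s t. s \<le> t \<Longrightarrow> f t \<le> f s" and bd: "\<And>s. B \<le> f s"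
  shows "\<exists>l. (f \<longlongrightarrow> l) at_top"
proof -
  have bdd: "bdd_below (range f)" using bd by (meson bdd_belowI2)
  show ?thesis
  proof (intro exI decreasing_tendsto)
    show "\<forall>\<^sub>F n in at_top. Inf (range f) \<le> f n"
      using bdd by (intro always_eventually allI cInf_lower) auto
    fix x assume "Inf (range f) < x"
    then obtain y where "f y < x" using bdd by (auto simp: cInf_less_iff)
    then show "\<forall>\<^sub>F n in at_top. f n < x"
      unfolding eventually_at_top_linorder using dec by (meson le_less_trans)
  qed
qed

lemma barbalat:
  fixes f g k k' :: "real \<Rightarrow> real"
  assumes lim: "(f \<longlongrightarrow> l) at_top"
    and df: "\<And>s. (f has_real_derivative g s) (at s)"
    and dk: "\<And>s. (k has_real_derivative k' s) (at s)"
    and bk: "\<And>s. \<bar>k' s\<bar> \<le> M"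
    and c: "c > 0"
    and gk: "\<And>s. c * \<bar>k s\<bar> \<le> \<bar>g s\<bar>"
  shows "(k \<longlongrightarrow> 0) at_top"
proof (rule tendstoI)
  fix e :: real assume e: "e > 0"
  define M' where "M' = max M 1"
  have M': "M' > 0" "\<And>s. \<bar>k' s\<bar> \<le> M'" using bk by (auto simp: M'_def intro: max.coboundedI1)
  define \<delta> where "\<delta> = e / (2*M')"
  have \<delta>: "\<delta> > 0" using e M' by (simp add: \<delta>_def)
  define \<eta> where "\<eta> = c * e * \<delta> / 2"
  have \<eta>: "\<eta> > 0" using c e \<delta> by (simp add: \<eta>_def)
  from tendstoD[OF lim, of "\<eta>/2"] \<eta> obtain N where N: "\<And>s. s \<ge> N \<Longrightarrow> \<bar>f s - l\<bar> < \<eta>/2"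
    unfolding eventually_at_top_linorder dist_real_def by auto
  have "\<forall>s\<ge>N. \<bar>k s\<bar> < e"
  proof (intro allI impI, rule ccontr)
    fix s assume sN: "s \<ge> N" and "\<not> \<bar>k s\<bar> < e"
    hence ks: "\<bar>k s\<bar> \<ge> e" by simp
    have kt: "\<bar>k t\<bar> \<ge> e/2" if "s \<le> t" "t \<le> s + \<delta>" for t
    proof (cases "s = t")
      case True then show ?thesis using ks e by simp
    next
      case False
      hence "s < t" using that by simp
      from MVT2[OF this, of k k'] dk obtain z where "k t - k s = (t - s) * k' z" by blast
      hence "\<bar>k t - k s\<bar> \<le> (t - s) * M'"
        using M'(2)[of z] \<open>s<t\<close> by (simp add: abs_mult mult_left_mono)
      also have "\<dots> \<le> \<delta> * M'" using that M' by (simp add: mult_right_mono)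
      also have "\<dots> = e/2" using M' by (simp add: \<delta>_def)
      finally show ?thesis using ks by linarith
    qed
    from MVT2[of s "s+\<delta>" f g] df \<delta> obtain z where z: "s < z" "z < s + \<delta>"
      and fz: "f (s+\<delta>) - f s = \<delta> * g z" by auto
    have "c * (e/2) \<le> c * \<bar>k z\<bar>" using kt[of z] z c by (simp add: mult_left_mono)
    also have "\<dots> \<le> \<bar>g z\<bar>" by (rule gk)
    finally have "\<delta> * (c * (e/2)) \<le> \<delta> * \<bar>g z\<bar>" using \<delta> by (simp add: mult_left_mono)
    hence "\<eta> \<le> \<bar>f (s+\<delta>) - f s\<bar>" using fz \<delta> by (simp add: \<eta>_def abs_mult)
    moreover have "\<bar>f (s+\<delta>) - f s\<bar> < \<eta>" using N[of s] N[of "s+\<delta>"] sN \<delta> by linarith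
    ultimately show False by simp
  qed
  then show "\<forall>\<^sub>F s in at_top. dist (k s) 0 < e"
    unfolding eventually_at_top_linorder dist_real_def by auto
qed

lemma ident: fixes m x G :: real assumes "m \<noteq> 0"
  shows "(-2*x*(x*(G-1)) + 2*(1-x)*(x*(G-1))/m) - 2*(1 - x^2 - (1-x)^2/m)*(m*G - (1-x))/m
     = -(G - x^2 - (1-x)^2/m)*(2 - 2*(1-x)/m)"
  using assms by (simp add: field_simps power2_eq_square)

lemma split1: "(r::nat) \<ge> 1 \<Longrightarrow> sum f {1..r} = f 1 + sum f {2..r}"
  using sum.atLeast_Suc_atMost[of 1 r f] by (simp add: numeral_2_eq_2)

theorem theorem4p5:
  fixes r :: nat and d :: "nat \<Rightarrow> nat" and lam :: "nat \<Rightarrow> real"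
    and X Y :: "nat \<Rightarrow> real \<Rightarrow> real"
  assumes r2: "r \<ge> 2"
    and d1: "d 1 = 1" and l1: "lam 1 = 0"
    and dl: "\<forall>i\<in>{2..r}. d i \<ge> 2 \<and> lam i > 0"
    and nd: "n = (\<Sum>i\<in>{1..r}. d i)"
    and rf: "ricci_flat_trajectory r d lam X Y"
  shows "((X 1) \<longlongrightarrow> 0) at_top
    \<and> (\<forall>i\<in>{2..r}. ((X i) \<longlongrightarrow> sqrt (real (d i)) / (real n - 1)) at_top
         \<and> ((Y i) \<longlongrightarrow> sqrt ((real n - 2) / lam i) * (sqrt (real (d i)) / (real n - 1))) at_top)"
proof -
  define G where "G = (\<lambda>s. calG r X s)"
  define S where "S = (\<lambda>s. \<Sum>i\<in>{2..r}. lam i * (Y i s)^2)"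
  define m where "m = (\<Sum>i\<in>{2..r}. real (d i))"
  define Xd where "Xd = (\<lambda>i s. X i s * (G s - 1) + lam i * (Y i s)^2 / sqrt (real (d i)))"
  define Yd where "Yd = (\<lambda>i s. Y i s * (G s - X i s / sqrt (real (d i))))"
  have dX: "\<And>i s. i \<in> {1..r} \<Longrightarrow> (X i has_real_derivative Xd i s) (at s)"
    and dY: "\<And>i s. i \<in> {1..r} \<Longrightarrow> (Y i has_real_derivative Yd i s) (at s)"
    using rf unfolding ricci_flat_trajectory_def Xd_def Yd_def G_def by auto
  have limbot: "((X 1) \<longlongrightarrow> 1) at_bot"
  proof -
    have "\<forall>i\<in>{1..r}. ((X i) \<longlongrightarrow> (if i = 1 then 1 else 0)) at_bot"
      using rf unfolding ricci_flat_trajectory_def by blast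
    moreover have "(1::nat) \<in> {1..r}" using r2 by simp
    ultimately show ?thesis by (metis (full_types))
  qed
  have LH: "\<And>s. calL r lam X Y s = 0 \<and> calH r d X s = 1"
    and Ypos: "\<And>i s. i \<in> {1..r} \<Longrightarrow> Y i s > 0"
    using rf unfolding ricci_flat_trajectory_def by auto
  have r1: "r \<ge> 1" using r2 by simp
  have Gdef: "\<And>s. G s = (\<Sum>j\<in>{1..r}. (X j s)^2)" by (simp add: G_def calG_def)
  have GS: "\<And>s. G s + S s = 1"
  proof -
    fix s
    have "(\<Sum>i\<in>{1..r}. lam i * (Y i s)^2) = S s" using split1[OF r1, of "\<lambda>i. lam i * (Y i s)^2"] l1 by (simp add: S_def)
    then show "G s + S s = 1" using LH[of s] by (simp add: calL_def Gdef)
  qed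
  have H: "\<And>s. X 1 s + (\<Sum>i\<in>{2..r}. sqrt (real (d i)) * X i s) = 1"
    using LH split1[OF r1, of "\<lambda>i. sqrt (real (d i)) * X i s" for s] d1 by (simp add: calH_def)
  have nm: "real n - 1 = m"
    using split1[OF r1, of "\<lambda>i. real (d i)"] d1 nd by (simp add: m_def)
  have m2: "m \<ge> 2"
  proof -
    have "real (d 2) \<le> m" unfolding m_def by (rule member_le_sum) (use r2 in auto)
    then show ?thesis using dl r2 by force
  qed
  have dge1: "\<And>i. i \<in> {1..r} \<Longrightarrow> 1 \<le> real (d i)"
    proof -
    fix i :: nat assume i: "i \<in> {1..r}"
    show "1 \<le> real (d i)"
    proof (cases "i = 1")
      case True then show ?thesis using d1 by simp
    next
      case False then have "i \<in> {2..r}" using i by auto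
      then have "d i \<ge> 2" using dl by auto
      then show ?thesis by simp
    qed
  qed
  have lampos: "\<And>i. i \<in> {2..r} \<Longrightarrow> lam i > 0" using dl by auto
  have lnn: "\<And>i s. i \<in> {1..r} \<Longrightarrow> 0 \<le> lam i * (Y i s)^2"
  proof -
    fix i s assume i: "i \<in> {1..r}"
    have "0 \<le> lam i" using i l1 lampos[of i] by (cases "i = 1") auto
    then show "0 \<le> lam i * (Y i s)^2" by simp
  qed
  have lY: "\<And>i s. i \<in> {1..r} \<Longrightarrow> 0 \<le> lam i * (Y i s)^2 \<and> lam i * (Y i s)^2 \<le> S s"
  proof -
    fix i s assume i: "i \<in> {1..r}"
    have Snn: "0 \<le> S s" unfolding S_def by (rule sum_nonneg) (use lnn in auto)
    show "0 \<le> lam i * (Y i s)^2 \<and> lam i * (Y i s)^2 \<le> S s"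
    proof (cases "i = 1")
      case True then show ?thesis using l1 Snn by simp
    next
      case False
      hence i2: "i \<in> {2..r}" using i by auto
      show ?thesis using i2 lnn i unfolding S_def by (auto intro!: member_le_sum)
    qed
  qed
  have Spos: "\<And>s. S s > 0"
  proof -
    fix s
    have "0 < lam 2 * (Y 2 s)^2" using dl r2 Ypos[of 2 s] by auto
    also have "\<dots> \<le> S s" using lY[of 2 s] r2 by auto
    finally show "S s > 0" .
  qed
  have Xsq: "\<And>i s. i \<in> {1..r} \<Longrightarrow> (X i s)^2 \<le> G s"
    unfolding Gdef by (rule member_le_sum) auto
  have G0: "\<And>s. 0 \<le> G s" unfolding Gdef by (simp add: sum_nonneg)
  have Xb: "\<And>i s. i \<in> {1..r} \<Longrightarrow> \<bar>X i s\<bar> \<le> 1"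
  proof -
    fix i s assume "i \<in> {1..r}"
    then have "(X i s)^2 \<le> 1" using Xsq[of i s] GS[of s] Spos[of s] by linarith
    then show "\<bar>X i s\<bar> \<le> 1" by (simp add: abs_square_le_1)
  qed
  define BY where "BY = 1 + (\<Sum>i\<in>{2..r}. 1 / lam i)"
  have Yb: "\<And>i s. i \<in> {2..r} \<Longrightarrow> Y i s \<le> BY"
  proof -
    fix i s assume i: "i \<in> {2..r}"
    have li: "lam i > 0" using lampos[OF i] .
    have "lam i * (Y i s)^2 \<le> 1" using lY[of i s] GS[of s] G0[of s] i by auto
    hence Y2: "(Y i s)^2 \<le> 1 / lam i" using li by (simp add: field_simps)
    have "1 / lam i \<le> (\<Sum>i\<in>{2..r}. 1 / lam i)"
      by (rule member_le_sum) (use i lampos in \<open>auto simp: less_imp_le\<close>)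
    hence le: "(Y i s)^2 \<le> BY - 1" using Y2 by (simp add: BY_def)
    show "Y i s \<le> BY"
    proof (cases "Y i s \<le> 1")
      case True
      have "0 \<le> BY - 1" using le by (smt (verit) zero_le_power2)
      then show ?thesis using True by simp
    next
      case False
      hence "Y i s \<le> (Y i s)^2" by (simp add: power2_eq_square)
      then show ?thesis using le by simp
    qed
  qed
  have BY1: "BY \<ge> 1" using Yb[of 2 0] Ypos[of 2 0] r2
    by (smt (verit, best) BY_def atLeastAtMost_iff lampos less_imp_le sum_nonneg zero_le_divide_1_iff)
  have Gle: "\<And>s. G s \<le> 1" using GS Spos by (smt (verit))
  have Xdb: "\<And>i s. i \<in> {1..r} \<Longrightarrow> \<bar>Xd i s\<bar> \<le> 2"
  proof -
    fix i s assume i: "i \<in> {1..r}"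
    have a: "\<bar>X i s * (G s - 1)\<bar> \<le> 1"
      using Xb[OF i, of s] G0[of s] Gle[of s] by (simp add: abs_mult abs_le_iff mult_le_one)
    have sq: "1 \<le> sqrt (real (d i))" using dge1[OF i] by simp
    have b0: "0 \<le> lam i * (Y i s)^2" and b1: "lam i * (Y i s)^2 \<le> 1"
      using lY[OF i, of s] GS[of s] G0[of s] by auto
    have "lam i * (Y i s)^2 / sqrt (real (d i)) \<le> lam i * (Y i s)^2"
      using sq b0 by (simp add: divide_le_eq mult_le_cancel_left1 mult_le_cancel_left)
    moreover have "0 \<le> lam i * (Y i s)^2 / sqrt (real (d i))" using b0 by simp
    ultimately show "\<bar>Xd i s\<bar> \<le> 2" using a b1 unfolding Xd_def by linarith
  qed
  have Ydb: "\<And>i s. i \<in> {2..r} \<Longrightarrow> \<bar>Yd i s\<bar> \<le> 2 * BY"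
  proof -
    fix i s assume i2: "i \<in> {2..r}"
    hence i: "i \<in> {1..r}" by auto
    have sq: "1 \<le> sqrt (real (d i))" using dge1[OF i] by simp
    have "\<bar>X i s / sqrt (real (d i))\<bar> \<le> \<bar>X i s\<bar>"
      using sq by (simp add: abs_div divide_le_eq mult_le_cancel_left1)
    hence "\<bar>G s - X i s / sqrt (real (d i))\<bar> \<le> 2" using Xb[OF i, of s] G0[of s] Gle[of s] by linarith
    moreover have "\<bar>Y i s\<bar> \<le> BY" using Yb[OF i2, of s] Ypos[OF i, of s] by simp
    ultimately have "\<bar>Y i s\<bar> * \<bar>G s - X i s / sqrt (real (d i))\<bar> \<le> BY * 2"
      by (intro mult_mono) auto
    then show "\<bar>Yd i s\<bar> \<le> 2 * BY" unfolding Yd_def abs_mult by simp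
  qed
  have one: "(1::nat) \<in> {1..r}" using r1 by simp
  have one: "(1::nat) \<in> {1..r}" using r1 by simp
  have dX1: "\<And>s. (X 1 has_real_derivative Xd 1 s) (at s)" using dX[OF one] .
  have dX1': "\<And>s. (X (Suc 0) has_real_derivative Xd (Suc 0) s) (at s)" using dX1 by simp
  have Xd1: "\<And>s. Xd 1 s = - X 1 s * S s"
  proof -
    fix s have "G s - 1 = - S s" using GS[of s] by linarith
    then show "Xd 1 s = - X 1 s * S s" unfolding Xd_def using l1 by simp
  qed
  have X1ne: "\<And>s. X 1 s \<noteq> 0"
  proof
    fix s0 assume z: "X 1 s0 = 0"
    define Q where "Q = (\<lambda>s. (X 1 s)^2 * exp (2 * s))"
    have dQ: "(Q has_real_derivative (2 * X 1 s * Xd 1 s * exp (2 * s) + (X 1 s)^2 * (exp (2 * s) * 2))) (at s)" for s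
      unfolding Q_def using dX1 dX1' by (auto intro!: derivative_eq_intros)
    have Qmono: "Q t \<le> Q s0" if "t \<le> s0" for t
    proof (rule DERIV_nonneg_imp_nondecreasing[OF that])
      fix x
      have "2 * X 1 x * Xd 1 x * exp (2 * x) + (X 1 x)^2 * (exp (2 * x) * 2) = 2 * (X 1 x)^2 * exp (2 * x) * G x"
      proof -
        have hG: "G x = 1 - S x" using GS[of x] by linarith
        have x1: "Xd (Suc 0) x = - X (Suc 0) x * S x" using Xd1[of x] by simp
        show ?thesis by (simp add: hG Xd1 x1 algebra_simps power2_eq_square)
      qed
      also have "\<dots> \<ge> 0" using G0[of x] by simp
      finally show "\<exists>y. DERIV Q x :> y \<and> y \<ge> 0" using dQ by blast
    qed
    have "\<forall>\<^sub>F t in at_bot. X 1 t > 1/2" using limbot by (rule order_tendstoD) simp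
    then obtain T where T: "\<And>t. t \<le> T \<Longrightarrow> X 1 t > 1/2" unfolding eventually_at_bot_linorder by auto
    define t where "t = min T s0"
    have "Q t \<le> 0" using Qmono[of t] z by (simp add: t_def Q_def)
    moreover have "Q t > 0" using T[of t] by (simp add: t_def Q_def)
    ultimately show False by simp
  qed
  have X1pos: "\<And>s. X 1 s > 0"
  proof (rule ccontr)
    fix s assume "\<not> X 1 s > 0"
    hence neg: "X 1 s \<le> 0" by simp
    have "\<forall>\<^sub>F t in at_bot. X 1 t > 1/2" using limbot by (rule order_tendstoD) simp
    then obtain T where T: "\<And>t. t \<le> T \<Longrightarrow> X 1 t > 1/2" unfolding eventually_at_bot_linorder by auto
    define a where "a = min T s"
    have "\<exists>x. a \<le> x \<and> x \<le> s \<and> X 1 x = 0"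
    proof (rule IVT2)
      show "X 1 s \<le> 0" by (rule neg)
      show "0 \<le> X 1 a" using T[of a] by (simp add: a_def)
      show "a \<le> s" by (simp add: a_def)
      show "\<forall>x. a \<le> x \<and> x \<le> s \<longrightarrow> isCont (X 1) x" using dX[OF one] DERIV_isCont by blast
    qed
    then show False using X1ne by auto
  qed
  have X1dec: "\<And>s t. s < t \<Longrightarrow> X 1 t < X 1 s"
  proof -
    fix s t :: real assume st: "s < t"
    show "X 1 t < X 1 s"
    proof (rule DERIV_neg_imp_decreasing[OF st])
      fix x show "\<exists>y. DERIV (X 1) x :> y \<and> y < 0"
        using dX[OF one, of x] Xd1[of x] X1pos[of x] Spos[of x] by (intro exI[of _ "Xd 1 x"]) simp
    qed
  qed
  have X1lt1: "\<And>s. X 1 s < 1"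
  proof -
    fix s have "X 1 s < X 1 (s - 1)" by (rule X1dec) simp
    also have "\<dots> \<le> 1" using Xb[OF one, of "s-1"] by simp
    finally show "X 1 s < 1" .
  qed
  have X1dec': "\<And>s t. s \<le> t \<Longrightarrow> X 1 t \<le> X 1 s"
    using X1dec by (metis order.order_iff_strict)
  have "\<exists>a. ((X 1) \<longlongrightarrow> a) at_top"
    by (rule mono_conv[of "X 1" 0]) (use X1dec' in blast, use X1pos in \<open>simp add: less_imp_le\<close>)
  then obtain a where X1lim: "((X 1) \<longlongrightarrow> a) at_top" by blast
  have a0: "a \<ge> 0" by (rule tendsto_lowerbound[OF X1lim]) (use X1pos in \<open>auto intro!: always_eventually less_imp_le\<close>)
  have a1: "a < 1"
  proof -
    have "a \<le> X 1 0" by (rule tendsto_upperbound[OF X1lim])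
      (use X1dec' in \<open>auto simp: eventually_at_top_linorder intro!: exI[of _ 0]\<close>)
    then show ?thesis using X1lt1[of 0] by simp
  qed
  have m0: "m \<noteq> 0" "m > 0" using m2 by auto
  have Hs: "\<And>s. (\<Sum>i\<in>{2..r}. sqrt (real (d i)) * X i s) = 1 - X 1 s" using H by (simp add: algebra_simps)
  have GX: "\<And>s. (\<Sum>i\<in>{2..r}. (X i s)^2) = G s - (X 1 s)^2"
    using split1[OF r1, of "\<lambda>i. (X i s)^2" for s] Gdef by simp
  define c where "c = (\<lambda>s. (1 - X 1 s) / m)"
  define K2 where "K2 = (\<lambda>s. \<Sum>i\<in>{2..r}. (X i s - sqrt (real (d i)) * c s)^2)"
  have K2nn: "\<And>s. K2 s \<ge> 0" unfolding K2_def by (simp add: sum_nonneg)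
  have K2eq: "\<And>s. K2 s = G s - (X 1 s)^2 - (1 - X 1 s)^2 / m"
  proof -
    fix s
    have "\<And>i. i \<in> {2..r} \<Longrightarrow> (X i s - sqrt (real (d i)) * c s)^2
        = (X i s)^2 - 2 * c s * (sqrt (real (d i)) * X i s) + (c s)^2 * real (d i)"
      by (simp add: power2_diff power_mult_distrib algebra_simps)
    hence "K2 s = (\<Sum>i\<in>{2..r}. (X i s)^2) - 2 * c s * (\<Sum>i\<in>{2..r}. sqrt (real (d i)) * X i s)
        + (c s)^2 * m"
      unfolding K2_def m_def by (simp add: sum.distrib sum_subtractf sum_distrib_left)
    also have "\<dots> = (G s - (X 1 s)^2) - 2 * c s * (1 - X 1 s) + (c s)^2 * m"
      by (simp only: GX Hs)
    also have "\<dots> = G s - (X 1 s)^2 - (1 - X 1 s)^2 / m"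
      using m0 by (simp add: c_def field_simps power2_eq_square)
    finally show "K2 s = G s - (X 1 s)^2 - (1 - X 1 s)^2 / m" .
  qed
  define Lam where "Lam = (\<lambda>s. \<Sum>i\<in>{2..r}. real (d i) * ln (Y i s))"
  define N where "N = (\<lambda>s. 1 - (X 1 s)^2 - (1 - X 1 s)^2 / m)"
  define V where "V = (\<lambda>s. N s * exp (- 2 * Lam s / m))"
  define Vd where "Vd = (\<lambda>s. - exp (- 2 * Lam s / m) * K2 s * (2 - 2 * (1 - X 1 s) / m))"
  have dLam: "\<And>s. (Lam has_real_derivative (m * G s - (1 - X 1 s))) (at s)"
  proof -
    fix s
    have "(Lam has_real_derivative (\<Sum>i\<in>{2..r}. real (d i) * (1 / Y i s * Yd i s))) (at s)"
      unfolding Lam_def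
    proof (rule DERIV_sum, rule DERIV_cmult, rule DERIV_chain2[where f = ln])
      fix i assume i: "i \<in> {2..r}"
      show "DERIV ln (Y i s) :> 1 / Y i s" using Ypos[of i s] i by (intro DERIV_ln_divide) auto
      show "(Y i has_real_derivative Yd i s) (at s)" using dY[of i s] i by auto
    qed
    moreover have "(\<Sum>i\<in>{2..r}. real (d i) * (1 / Y i s * Yd i s))
        = (\<Sum>i\<in>{2..r}. real (d i) * G s - sqrt (real (d i)) * X i s)"
    proof (rule sum.cong)
      fix i assume i: "i \<in> {2..r}"
      have Yp: "Y i s > 0" using Ypos[of i s] i by auto
      have dd: "real (d i) * (X i s / sqrt (real (d i))) = sqrt (real (d i)) * X i s"
      proof -
        have "real (d i) * (X i s / sqrt (real (d i))) = (real (d i) / sqrt (real (d i))) * X i s" by simp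
        also have "\<dots> = sqrt (real (d i)) * X i s" using real_div_sqrt[of "real (d i)"] by simp
        finally show ?thesis .
      qed
      then show "real (d i) * (1 / Y i s * Yd i s) = real (d i) * G s - sqrt (real (d i)) * X i s"
      proof -
        have "1 / Y i s * Yd i s = G s - X i s / sqrt (real (d i))" using Yp by (simp add: Yd_def)
        then show ?thesis using dd by (simp add: right_diff_distrib)
      qed
    qed simp
    moreover have "\<dots> = m * G s - (1 - X 1 s)"
      by (simp add: sum_subtractf Hs m_def sum_distrib_right)
    ultimately show "(Lam has_real_derivative (m * G s - (1 - X 1 s))) (at s)" by simp
  qed
  have dV: "\<And>s. (V has_real_derivative Vd s) (at s)"
  proof -
    fix s
    define e where "e = exp (- 2 * Lam s / m)"
    have "(V has_real_derivative ((-2 * X 1 s * Xd 1 s + 2 * (1 - X 1 s) * Xd 1 s / m) * e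
          + N s * (e * (- 2 * (m * G s - (1 - X 1 s)) / m)))) (at s)"
      unfolding V_def N_def e_def
      using m0 by (auto intro!: derivative_eq_intros dLam dX1 dX1' simp: field_simps power2_eq_square)
    moreover have "(-2 * X 1 s * Xd 1 s + 2 * (1 - X 1 s) * Xd 1 s / m) * e
          + N s * (e * (- 2 * (m * G s - (1 - X 1 s)) / m)) = Vd s"
    proof -
      have gs: "G s - 1 = - S s" using GS[of s] by linarith
      have x1: "Xd 1 s = X 1 s * (G s - 1)" unfolding gs using Xd1[of s] by (metis mult_minus_right mult_minus_left)
      have idn: "(-2 * X 1 s * Xd 1 s + 2 * (1 - X 1 s) * Xd 1 s / m)
          - 2 * N s * (m * G s - (1 - X 1 s)) / m = - K2 s * (2 - 2 * (1 - X 1 s) / m)"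
        unfolding x1 N_def K2eq using ident[OF m0(1), of "X 1 s" "G s"] by simp
      have "(-2 * X 1 s * Xd 1 s + 2 * (1 - X 1 s) * Xd 1 s / m) * e
          + N s * (e * (- 2 * (m * G s - (1 - X 1 s)) / m))
          = e * ((-2 * X 1 s * Xd 1 s + 2 * (1 - X 1 s) * Xd 1 s / m)
          - 2 * N s * (m * G s - (1 - X 1 s)) / m)"
        using m0 by (simp add: field_simps)
      also have "\<dots> = Vd s" unfolding idn Vd_def e_def by simp
      finally show ?thesis .
    qed
    ultimately show "(V has_real_derivative Vd s) (at s)" by simp
  qed
  have Nnn: "\<And>s. N s = S s + K2 s" unfolding N_def K2eq using GS by (smt (verit))
  have e_pos: "\<And>s. exp (- 2 * Lam s / m) > 0" by simp
  have fac: "\<And>s. 2 - 2 * (1 - X 1 s) / m \<ge> 1"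
  proof -
    fix s have "(1 - X 1 s) / m \<le> 1/2" using X1pos[of s] m2 by (simp add: divide_le_eq)
    then show "2 - 2 * (1 - X 1 s) / m \<ge> 1" by (simp add: mult.commute)
  qed
  have Vnn: "\<And>s. V s \<ge> 0" unfolding V_def using Nnn Spos K2nn by (smt (verit) e_pos mult_nonneg_nonneg)
  have Vdnp: "\<And>s. Vd s \<le> 0"
  proof -
    fix s have "0 \<le> exp (- 2 * Lam s / m) * K2 s * (2 - 2 * (1 - X 1 s) / m)"
      using e_pos[of s] K2nn[of s] fac[of s] by simp
    then show "Vd s \<le> 0" unfolding Vd_def by simp
  qed
  have Vdec: "\<And>s t. s \<le> t \<Longrightarrow> V t \<le> V s"
    by (rule DERIV_nonpos_imp_nonincreasing) (use dV Vdnp in blast)+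
  have "\<exists>l. (V \<longlongrightarrow> l) at_top"
    by (rule mono_conv[of V 0]) (use Vdec in blast, use Vnn in blast)
  then obtain lV where Vlim: "(V \<longlongrightarrow> lV) at_top" by blast
  have BYpos: "BY > 0" using BY1 by simp
  define C where "C = (\<Sum>i\<in>{2..r}. real (d i) * ln BY)"
  have LamC: "\<And>s. Lam s \<le> C"
    unfolding Lam_def C_def
  proof (rule sum_mono)
    fix s i assume i: "i \<in> {2..r}"
    have "ln (Y i s) \<le> ln BY" using Yb[OF i, of s] Ypos[of i s] i BYpos by simp
    then show "real (d i) * ln (Y i s) \<le> real (d i) * ln BY" by (simp add: mult_left_mono)
  qed
  define c0 where "c0 = exp (- 2 * C / m)"
  have c0: "c0 > 0" by (simp add: c0_def)
  have Vdb: "\<And>s. c0 * \<bar>K2 s\<bar> \<le> \<bar>Vd s\<bar>"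
  proof -
    fix s
    have "- 2 * C / m \<le> - 2 * Lam s / m" using LamC[of s] m0 by (simp add: divide_le_eq)
    hence ce: "c0 \<le> exp (- 2 * Lam s / m)" by (simp add: c0_def)
    have "c0 * \<bar>K2 s\<bar> = c0 * K2 s" using K2nn[of s] by simp
    also have "\<dots> \<le> exp (- 2 * Lam s / m) * K2 s" using ce K2nn[of s] by (simp add: mult_right_mono)
    also have "\<dots> \<le> exp (- 2 * Lam s / m) * K2 s * (2 - 2 * (1 - X 1 s) / m)"
    proof -
      have "0 \<le> exp (- 2 * Lam s / m) * K2 s" using K2nn[of s] by simp
      from mult_left_mono[OF fac[of s] this] show ?thesis by simp
    qed
    also have "\<dots> = \<bar>Vd s\<bar>"
    proof -
      have nn: "0 \<le> exp (- 2 * Lam s / m) * K2 s * (2 - 2 * (1 - X 1 s) / m)"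
        using e_pos[of s] K2nn[of s] fac[of s] by simp
      show ?thesis unfolding Vd_def mult_minus_left abs_minus_cancel using nn by simp
    qed
    finally show "c0 * \<bar>K2 s\<bar> \<le> \<bar>Vd s\<bar>" .
  qed
  have cb: "\<And>s. 0 \<le> c s \<and> c s \<le> 1 / m"
    using X1pos X1lt1 m0 unfolding c_def by (smt (verit) divide_nonneg_pos divide_right_mono)
  define K2d where "K2d = (\<lambda>s. \<Sum>i\<in>{2..r}. 2 * (X i s - sqrt (real (d i)) * c s) * (Xd i s + sqrt (real (d i)) * Xd 1 s / m))"
  have dK2: "\<And>s. (K2 has_real_derivative K2d s) (at s)"
  proof -
    fix s
    show "(K2 has_real_derivative K2d s) (at s)"
      unfolding K2_def K2d_def
    proof (rule DERIV_sum)
      fix i assume i: "i \<in> {2..r}"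
      hence i1: "i \<in> {1..r}" by auto
      have "((\<lambda>s. X i s - sqrt (real (d i)) * c s) has_real_derivative (Xd i s + sqrt (real (d i)) * Xd 1 s / m)) (at s)"
        unfolding c_def using dX[OF i1, of s] dX1[of s] dX1'[of s] m0
        by (auto intro!: derivative_eq_intros simp: field_simps)
      from DERIV_power[OF this, of 2]
      show "((\<lambda>s. (X i s - sqrt (real (d i)) * c s)^2) has_real_derivative
          2 * (X i s - sqrt (real (d i)) * c s) * (Xd i s + sqrt (real (d i)) * Xd 1 s / m)) (at s)"
        by (rule DERIV_cong) (use m0 in \<open>simp add: field_simps\<close>)
    qed
  qed
  define MK where "MK = (\<Sum>i\<in>{2..r}. 2 * (1 + sqrt (real (d i)) / m) * (2 + 2 * (sqrt (real (d i)) / m)))"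
  have K2db: "\<And>s. \<bar>K2d s\<bar> \<le> MK"
  proof -
    fix s
    have "\<bar>K2d s\<bar> \<le> (\<Sum>i\<in>{2..r}. \<bar>2 * (X i s - sqrt (real (d i)) * c s) * (Xd i s + sqrt (real (d i)) * Xd 1 s / m)\<bar>)"
      unfolding K2d_def by (rule sum_abs)
    also have "\<dots> \<le> MK" unfolding MK_def
    proof (rule sum_mono)
      fix i assume i: "i \<in> {2..r}"
      hence i1: "i \<in> {1..r}" by auto
      define q where "q = sqrt (real (d i)) / m"
      have q0: "q \<ge> 0" using m0 by (simp add: q_def)
      have A: "\<bar>X i s - sqrt (real (d i)) * c s\<bar> \<le> 1 + q"
      proof -
        have "sqrt (real (d i)) * c s \<le> sqrt (real (d i)) * (1/m)" using cb[of s] by (intro mult_left_mono) auto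
        moreover have "0 \<le> sqrt (real (d i)) * c s" using cb[of s] by simp
        ultimately show ?thesis using Xb[OF i1, of s] by (simp add: q_def abs_le_iff)
      qed
      have B: "\<bar>Xd i s + sqrt (real (d i)) * Xd 1 s / m\<bar> \<le> 2 + 2 * q"
      proof -
        have "\<bar>sqrt (real (d i)) * Xd 1 s / m\<bar> = q * \<bar>Xd 1 s\<bar>" using m0 by (simp add: q_def abs_mult)
        also have "\<dots> \<le> q * 2" using Xdb[OF one, of s] q0 by (simp add: mult_left_mono)
        finally show ?thesis using Xdb[OF i1, of s] by linarith
      qed
      have "\<bar>2 * (X i s - sqrt (real (d i)) * c s) * (Xd i s + sqrt (real (d i)) * Xd 1 s / m)\<bar>
          = 2 * (\<bar>X i s - sqrt (real (d i)) * c s\<bar> * \<bar>Xd i s + sqrt (real (d i)) * Xd 1 s / m\<bar>)"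
        by (simp only: abs_mult abs_numeral mult.assoc)
      also have "\<dots> \<le> 2 * ((1 + q) * (2 + 2 * q))"
        using A B by (intro mult_left_mono mult_mono) auto
      finally have F: "\<bar>2 * (X i s - sqrt (real (d i)) * c s) * (Xd i s + sqrt (real (d i)) * Xd 1 s / m)\<bar>
          \<le> 2 * ((1 + q) * (2 + 2 * q))" .
      show "\<bar>2 * (X i s - sqrt (real (d i)) * c s) * (Xd i s + sqrt (real (d i)) * Xd 1 s / m)\<bar>
          \<le> 2 * (1 + sqrt (real (d i)) / m) * (2 + 2 * (sqrt (real (d i)) / m))"
        using F unfolding q_def by (simp only: mult.assoc)
    qed
    finally show "\<bar>K2d s\<bar> \<le> MK" .
  qed
  have K2lim: "(K2 \<longlongrightarrow> 0) at_top"
    by (rule barbalat[OF Vlim dV dK2 K2db c0 Vdb])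
  define Gd where "Gd = (\<lambda>s. \<Sum>j\<in>{1..r}. 2 * X j s * Xd j s)"
  have dG: "\<And>s. (G has_real_derivative Gd s) (at s)"
  proof -
    fix s
    have "((\<lambda>s. \<Sum>j\<in>{1..r}. (X j s)^2) has_real_derivative Gd s) (at s)"
      unfolding Gd_def
    proof (rule DERIV_sum)
      fix j assume j: "j \<in> {1..r}"
      from DERIV_power[OF dX[OF j, of s], of 2]
      show "((\<lambda>s. (X j s)^2) has_real_derivative 2 * X j s * Xd j s) (at s)"
        by (rule DERIV_cong) simp
    qed
    moreover have "G = (\<lambda>s. \<Sum>j\<in>{1..r}. (X j s)^2)" using Gdef by (intro ext) simp
    ultimately show "(G has_real_derivative Gd s) (at s)" by simp
  qed
  have Gdb: "\<And>s. \<bar>Gd s\<bar> \<le> 4 * real r"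
  proof -
    fix s
    have "\<bar>Gd s\<bar> \<le> (\<Sum>j\<in>{1..r}. \<bar>2 * X j s * Xd j s\<bar>)" unfolding Gd_def by (rule sum_abs)
    also have "\<dots> \<le> (\<Sum>j\<in>{1..r}. 4)"
    proof (rule sum_mono)
      fix j assume j: "j \<in> {1..r}"
      have "\<bar>X j s\<bar> * \<bar>Xd j s\<bar> \<le> 1 * 2" using Xb[OF j, of s] Xdb[OF j, of s] by (intro mult_mono) auto
      then show "\<bar>2 * X j s * Xd j s\<bar> \<le> 4" by (simp add: abs_mult)
    qed
    also have "\<dots> = 4 * real r" by simp
    finally show "\<bar>Gd s\<bar> \<le> 4 * real r" .
  qed
  define Xdd where "Xdd = (\<lambda>i s. Xd i s * (G s - 1) + X i s * Gd s + lam i * (2 * Y i s * Yd i s) / sqrt (real (d i)))"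
  have dXd: "\<And>i s. i \<in> {1..r} \<Longrightarrow> (Xd i has_real_derivative Xdd i s) (at s)"
  proof -
    fix i s assume i: "i \<in> {1..r}"
    have dY2: "((\<lambda>s. (Y i s)^2) has_real_derivative 2 * Y i s * Yd i s) (at s)"
      by (rule DERIV_cong[OF DERIV_power[OF dY[OF i, of s], of 2]]) simp
    show "(Xd i has_real_derivative Xdd i s) (at s)"
    proof -
      have dG1: "((\<lambda>s. G s - 1) has_real_derivative Gd s) (at s)"
        using DERIV_diff[OF dG[of s] DERIV_const[of 1]] by simp
      have a: "((\<lambda>s. X i s * (G s - 1)) has_real_derivative Xd i s * (G s - 1) + Gd s * X i s) (at s)"
        by (rule DERIV_mult[OF dX[OF i] dG1])
      have b: "((\<lambda>s. lam i * (Y i s)^2 / sqrt (real (d i))) has_real_derivative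
          lam i * (2 * Y i s * Yd i s) / sqrt (real (d i))) (at s)"
        by (rule DERIV_cdivide[OF DERIV_cmult[OF dY2]])
      have "Xd i = (\<lambda>s. X i s * (G s - 1) + lam i * (Y i s)^2 / sqrt (real (d i)))"
        by (intro ext) (simp add: Xd_def)
      then show ?thesis using DERIV_add[OF a b] unfolding Xdd_def by (simp add: mult.commute)
    qed
  qed
  have Xddb: "\<And>i s. i \<in> {1..r} \<Longrightarrow> \<bar>Xdd i s\<bar> \<le> 2 + 4 * real r + \<bar>lam i\<bar> * (4 * BY * BY)"
  proof -
    fix i s assume i: "i \<in> {1..r}"
    have t1: "\<bar>Xd i s * (G s - 1)\<bar> \<le> 2" using Xdb[OF i, of s] G0[of s] Gle[of s]
      by (simp add: abs_mult) (smt (verit) mult_left_le)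
    have t2: "\<bar>X i s * Gd s\<bar> \<le> 4 * real r"
    proof -
      have "\<bar>X i s\<bar> * \<bar>Gd s\<bar> \<le> 1 * (4 * real r)" using Xb[OF i, of s] Gdb[of s] by (intro mult_mono) auto
      then show ?thesis by (simp add: abs_mult)
    qed
    have t3: "\<bar>lam i * (2 * Y i s * Yd i s) / sqrt (real (d i))\<bar> \<le> \<bar>lam i\<bar> * (4 * BY * BY)"
    proof (cases "i = 1")
      case True then show ?thesis using l1 by simp
    next
      case False
      hence i2: "i \<in> {2..r}" using i by auto
      have sq: "1 \<le> sqrt (real (d i))" using dge1[OF i] by simp
      have yb: "\<bar>Y i s\<bar> \<le> BY" using Yb[OF i2, of s] Ypos[OF i, of s] by simp
      have "\<bar>2 * Y i s * Yd i s\<bar> = 2 * (\<bar>Y i s\<bar> * \<bar>Yd i s\<bar>)" by (simp add: abs_mult)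
      also have "\<dots> \<le> 2 * (BY * (2 * BY))" using yb Ydb[OF i2, of s] by (intro mult_left_mono mult_mono) auto
      finally have a: "\<bar>2 * Y i s * Yd i s\<bar> \<le> 4 * BY * BY" by simp
      have "\<bar>lam i * (2 * Y i s * Yd i s) / sqrt (real (d i))\<bar> \<le> \<bar>lam i * (2 * Y i s * Yd i s)\<bar>"
        using sq by (simp add: abs_div divide_le_eq mult_le_cancel_left1)
      also have "\<dots> \<le> \<bar>lam i\<bar> * (4 * BY * BY)" using a by (simp add: abs_mult mult_left_mono)
      finally show ?thesis .
    qed
    show "\<bar>Xdd i s\<bar> \<le> 2 + 4 * real r + \<bar>lam i\<bar> * (4 * BY * BY)"
      unfolding Xdd_def using t1 t2 t3 by linarith
  qed
  have XdLim: "\<And>i L. i \<in> {1..r} \<Longrightarrow> ((X i) \<longlongrightarrow> L) at_top \<Longrightarrow> ((Xd i) \<longlongrightarrow> 0) at_top"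
  proof -
    fix i L assume i: "i \<in> {1..r}" and lim: "((X i) \<longlongrightarrow> L) at_top"
    show "((Xd i) \<longlongrightarrow> 0) at_top"
      by (rule barbalat[OF lim dX[OF i] dXd[OF i] Xddb[OF i], of 1]) auto
  qed
  have Geq: "G = (\<lambda>s. K2 s + (X 1 s)^2 + (1 - X 1 s)^2 / m)" using K2eq by (intro ext) simp
  have Glim_a: "(G \<longlongrightarrow> 0 + a^2 + (1 - a)^2 / m) at_top"
    unfolding Geq by (intro tendsto_intros K2lim X1lim) (use m0 in auto)
  have Xd1eq: "Xd 1 = (\<lambda>s. X 1 s * (G s - 1))"
  proof (rule ext)
    fix s have gs: "G s - 1 = - S s" using GS[of s] by linarith
    show "Xd 1 s = X 1 s * (G s - 1)" unfolding gs using Xd1[of s] by (metis mult_minus_right mult_minus_left)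
  qed
  have "(Xd 1 \<longlongrightarrow> a * ((0 + a^2 + (1 - a)^2 / m) - 1)) at_top"
    unfolding Xd1eq by (intro tendsto_intros X1lim Glim_a)
  moreover have "(Xd 1 \<longlongrightarrow> 0) at_top" by (rule XdLim[OF one X1lim])
  ultimately have prod0: "a * ((0 + a^2 + (1 - a)^2 / m) - 1) = 0"
    by (rule tendsto_unique[OF trivial_limit_at_top_linorder])
  have "a^2 + (1 - a)^2 / m < 1"
  proof -
    have "(1 - a)^2 \<le> 1 - a" using a0 a1 by (simp add: power2_eq_square mult_le_cancel_left1)
    hence A: "(1 - a)^2 / 2 \<le> (1 - a) / 2" by simp
    have "(1 - a)^2 / m \<le> (1 - a)^2 / 2" using m2 by (intro divide_left_mono) auto
    hence B: "(1 - a)^2 / m \<le> (1 - a) / 2" using A by linarith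
    have C: "a^2 \<le> a" using a0 a1 using mult_left_le[of a a] by (simp add: power2_eq_square)
    show ?thesis using B C a1 by (simp add: field_simps)
  qed
  hence a00: "a = 0" using prod0 by simp
  have X1lim0: "((X 1) \<longlongrightarrow> 0) at_top" using X1lim a00 by simp
  have Glim: "(G \<longlongrightarrow> 1 / m) at_top" using Glim_a a00 by simp
  have clim: "(c \<longlongrightarrow> 1 / m) at_top"
  proof -
    have "(c \<longlongrightarrow> (1 - 0) / m) at_top" unfolding c_def by (intro tendsto_intros X1lim0) (use m0 in auto)
    then show ?thesis by simp
  qed
  have Xilim: "\<And>i. i \<in> {2..r} \<Longrightarrow> ((X i) \<longlongrightarrow> sqrt (real (d i)) / m) at_top"
  proof -
    fix i assume i: "i \<in> {2..r}"
    define t where "t = (\<lambda>s. X i s - sqrt (real (d i)) * c s)"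
    have tK: "\<And>s. \<bar>t s\<bar> \<le> sqrt (K2 s)"
    proof -
      fix s
      have "(t s)^2 \<le> K2 s" unfolding t_def K2_def by (rule member_le_sum) (use i in auto)
      then show "\<bar>t s\<bar> \<le> sqrt (K2 s)" using real_sqrt_le_mono by fastforce
    qed
    have sK: "((\<lambda>s. sqrt (K2 s)) \<longlongrightarrow> 0) at_top" using tendsto_real_sqrt[OF K2lim] by simp
    have "((\<lambda>s. - sqrt (K2 s)) \<longlongrightarrow> - 0) at_top" by (intro tendsto_intros sK)
    hence tlim: "(t \<longlongrightarrow> 0) at_top"
      by (intro tendsto_sandwich[of "\<lambda>s. - sqrt (K2 s)" t at_top "\<lambda>s. sqrt (K2 s)"])
         (use tK sK in \<open>auto intro!: always_eventually simp: abs_le_iff minus_le_iff\<close>)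
    have "X i = (\<lambda>s. t s + sqrt (real (d i)) * c s)" by (intro ext) (simp add: t_def)
    moreover have "((\<lambda>s. t s + sqrt (real (d i)) * c s) \<longlongrightarrow> 0 + sqrt (real (d i)) * (1/m)) at_top"
      by (intro tendsto_intros tlim clim)
    ultimately show "((X i) \<longlongrightarrow> sqrt (real (d i)) / m) at_top" by simp
  qed
  have Yilim: "\<And>i. i \<in> {2..r} \<Longrightarrow> ((Y i) \<longlongrightarrow> sqrt ((m - 1) / lam i) * (sqrt (real (d i)) / m)) at_top"
  proof -
    fix i assume i: "i \<in> {2..r}"
    hence i1: "i \<in> {1..r}" by auto
    have li: "lam i > 0" using lampos[OF i] .
    have sd: "sqrt (real (d i)) > 0" using dge1[OF i1] by simp
    have Xdl: "(Xd i \<longlongrightarrow> 0) at_top" by (rule XdLim[OF i1 Xilim[OF i]])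
    have eqY: "\<And>s. (Y i s)^2 = sqrt (real (d i)) * (Xd i s - X i s * (G s - 1)) / lam i"
      using li sd unfolding Xd_def by (simp add: field_simps)
    have "((\<lambda>s. sqrt (real (d i)) * (Xd i s - X i s * (G s - 1)) / lam i) \<longlongrightarrow>
        sqrt (real (d i)) * (0 - sqrt (real (d i)) / m * (1 / m - 1)) / lam i) at_top"
      by (intro tendsto_intros Xdl Xilim[OF i] Glim) (use li in auto)
    hence "((\<lambda>s. (Y i s)^2) \<longlongrightarrow> sqrt (real (d i)) * (0 - sqrt (real (d i)) / m * (1 / m - 1)) / lam i) at_top"
      using eqY by simp
    hence "((\<lambda>s. sqrt ((Y i s)^2)) \<longlongrightarrow> sqrt (sqrt (real (d i)) * (0 - sqrt (real (d i)) / m * (1 / m - 1)) / lam i)) at_top"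
      by (rule tendsto_real_sqrt)
    moreover have "(\<lambda>s. sqrt ((Y i s)^2)) = Y i" using Ypos[OF i1] by (intro ext) (simp add: less_imp_le)
    moreover have "sqrt (sqrt (real (d i)) * (0 - sqrt (real (d i)) / m * (1 / m - 1)) / lam i)
        = sqrt ((m - 1) / lam i) * (sqrt (real (d i)) / m)"
    proof (rule real_sqrt_unique)
      show "(sqrt ((m - 1) / lam i) * (sqrt (real (d i)) / m))^2
          = sqrt (real (d i)) * (0 - sqrt (real (d i)) / m * (1 / m - 1)) / lam i"
        using m2 li by (simp add: power_mult_distrib power_divide field_simps power2_eq_square)
      show "0 \<le> sqrt ((m - 1) / lam i) * (sqrt (real (d i)) / m)" using m2 li by simp
    qed
    ultimately show "((Y i) \<longlongrightarrow> sqrt ((m - 1) / lam i) * (sqrt (real (d i)) / m)) at_top" by simp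
  qed
  have n2: "real n - 2 = m - 1" using nm by simp
  show ?thesis using X1lim0 Xilim Yilim unfolding nm n2 by blast
qed
end
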